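(* As formal power series in $t$, $$\sum_{n\ge0}R_{1,n}t^n=R_{1,0}\,\frac{Z^{(G_r)}(0,-ty_2,-ty_3,\dots,-ty_{2r+1})}{Z^{(G_r)}(-ty_1,-ty_2,\dots,-ty_{2r+1})},$$ with $y_{2\alpha-1}=\frac{R_{\alpha-1,0}R_{\alpha,1}}{R_{\alpha,0}R_{\alpha-1,1}}$ ($1\le\alpha\le r+1$) and $y_{2\alpha}=\frac{R_{\alpha-1,0}R_{\alpha+1,1}}{R_{\alpha,0}R_{\alpha,1}}$ ($1\le\alpha\le r$).
   Context: Fix $r\ge1$, $I_r=\{1,\dots,r\}$. Let $R_{1,0},\dots,R_{r,0},R_{1,1},\dots,R_{r,1}$ be algebraically independent indeterminates over $\mathbb Q$ and $(R_{\alpha,n})_{0\le\alpha\le r+1,n\in\mathbb Z}$ the $A_r$ $Q$-system: the unique family of nonzero elements of $\mathbb Q(R_{1,0},\dots,R_{r,1})$ with these initial values, $R_{0,n}=R_{r+1,n}=1$, and $R_{\alpha,n+1}R_{\alpha,n-1}=R_{\alpha,n}^2+R_{\alpha+1,n}R_{\alpha-1,n}$ ($\alpha\in I_r$, $n\in\mathbb Z$). The graph $G_r$ has vertices $1,\dots,2r+1$ and edges $\{1,2\}$, $\{2k,2k+1\}$ ($1\le k\le r$), $\{2k-2,2k\}$ and $\{2k-1,2k\}$ ($2\le k\le r$). A hard particle configuration is a set of vertices no two of which are adjacent; with vertex weights $z_1,\dots,z_{2r+1}$, $Z^{(G_r)}(z_1,\dots,z_{2r+1})=\sum_C\prod_{i\in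 C}z_i$, summed over all hard particle configurations $C$ on $G_r$ (including the empty one). *)

theory Defs
  imports "HOL-Library.Poly_Mapping" "HOL-Computational_Algebra.Fraction_Field"
    "HOL-Computational_Algebra.Formal_Power_Series"
begin

text \<open>The field Q(R_{1,0},...,R_{r,1}): fractions of polynomials with rational
  coefficients in the indeterminates X_0, X_1, X_2, ... (monomials are finitely supported
  exponent maps nat =>0 nat).  R_{alpha,0} is X_(2 alpha), R_{alpha,1} is X_(2 alpha + 1).\<close>

type_synonym ratfun = "((nat \<Rightarrow>\<^sub>0 nat) \<Rightarrow>\<^sub>0 rat) fract"

definition qvar :: "nat \<Rightarrow> ratfun" where
  "qvar i = Fraction_Field.Fract (Poly_Mapping.single (Poly_Mapping.single i 1) 1) 1"

text \<open>The A_r Q-system with the given generic initial data (values at alpha > r+1 irrelevant).\<close>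
definition is_Q_system :: "nat \<Rightarrow> (nat \<Rightarrow> int \<Rightarrow> ratfun) \<Rightarrow> bool" where
  "is_Q_system r R \<longleftrightarrow>
     (\<forall>n. R 0 n = 1 \<and> R (r+1) n = 1) \<and>
     (\<forall>\<alpha>\<in>{1..r}. R \<alpha> 0 = qvar (2*\<alpha>) \<and> R \<alpha> 1 = qvar (2*\<alpha>+1)) \<and>
     (\<forall>\<alpha>\<in>{1..r}. \<forall>n. R \<alpha> n \<noteq> 0) \<and>
     (\<forall>\<alpha>\<in>{1..r}. \<forall>n. R \<alpha> (n+1) * R \<alpha> (n-1) = (R \<alpha> n)^2 + R (\<alpha>+1) n * R (\<alpha>-1) n)"

definition G_edges :: "nat \<Rightarrow> nat set set" where
  "G_edges r = {{1,2}} \<union> {{2*k, 2*k+1} | k. 1 \<le> k \<and> k \<le> r}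
     \<union> {{2*k-2, 2*k} | k. 2 \<le> k \<and> k \<le> r} \<union> {{2*k-1, 2*k} | k. 2 \<le> k \<and> k \<le> r}"

definition hard_particle_conf :: "nat \<Rightarrow> nat set \<Rightarrow> bool" where
  "hard_particle_conf r C \<longleftrightarrow> C \<subseteq> {1..2*r+1} \<and>
     (\<forall>i\<in>C. \<forall>j\<in>C. {i,j} \<notin> G_edges r)"

definition Z_G :: "nat \<Rightarrow> (nat \<Rightarrow> 'a::comm_ring_1) \<Rightarrow> 'a" where
  "Z_G r z = (\<Sum>C\<in>{C. hard_particle_conf r C}. \<Prod>i\<in>C. z i)"

definition y_wt :: "(nat \<Rightarrow> int \<Rightarrow> ratfun) \<Rightarrow> nat \<Rightarrow> ratfun" where
  "y_wt R i = (if odd i then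
       (let \<alpha> = (i+1) div 2 in R (\<alpha>-1) 0 * R \<alpha> 1 / (R \<alpha> 0 * R (\<alpha>-1) 1))
     else
       (let \<alpha> = i div 2 in R (\<alpha>-1) 0 * R (\<alpha>+1) 1 / (R \<alpha> 0 * R \<alpha> 1)))"

end

theory Submission
  imports Defs
begin

lemma edge_iff:
  assumes "1 \<le> i" "1 \<le> j" "i \<le> 2*r+1" "j \<le> 2*r+1"
  shows "{i,j} \<in> G_edges r \<longleftrightarrow> (j = i+1 \<or> i = j+1 \<or> (even i \<and> (j = i+2 \<or> i = j+2)))"
proof
  assume "{i,j} \<in> G_edges r"
  then show "j = i+1 \<or> i = j+1 \<or> (even i \<and> (j = i+2 \<or> i = j+2))"
    unfolding G_edges_def by (auto simp: doubleton_eq_iff)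
next
  assume h: "j = i+1 \<or> i = j+1 \<or> (even i \<and> (j = i+2 \<or> i = j+2))"
  have sym: "{i,j} = {j,i}" by auto
  have A: "{a, a+1} \<in> G_edges r" if "1 \<le> a" "a+1 \<le> 2*r+1" for a
  proof (cases "a = 1")
    case True then show ?thesis unfolding G_edges_def by auto
  next
    case False
    show ?thesis
    proof (cases "even a")
      case True
      then obtain k where k: "a = 2*k" by auto
      then have "{a,a+1} \<in> {{2*k, 2*k+1} | k. 1 \<le> k \<and> k \<le> r}" using that by auto
      then show ?thesis unfolding G_edges_def by blast
    next
      case ev: False
      then obtain k where k: "a = 2*k+1" using oddE by blast
      then have "{a,a+1} \<in> {{2*k-1, 2*k} | k. 2 \<le> k \<and> k \<le> r}" using that False
        by (auto intro!: exI[of _ "k+1"])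
      then show ?thesis unfolding G_edges_def by blast
    qed
  qed
  have B: "{a, a+2} \<in> G_edges r" if "even a" "1 \<le> a" "a+2 \<le> 2*r+1" for a
  proof -
    obtain k where k: "a = 2*k" using \<open>even a\<close> by (rule evenE)
    then have "{a,a+2} \<in> {{2*k-2, 2*k} | k. 2 \<le> k \<and> k \<le> r}" using that
      by (auto intro!: exI[of _ "k+1"])
    then show ?thesis unfolding G_edges_def by blast
  qed
  from h show "{i,j} \<in> G_edges r"
  proof (elim disjE conjE)
    assume "j = i+1" then show ?thesis using A[of i] assms by auto
  next
    assume "i = j+1" then show ?thesis using A[of j] assms sym by auto
  next
    assume "even i" "j = i+2" then show ?thesis using B[of i] assms by auto
  next
    assume "even i" "i = j+2" then show ?thesis using B[of j] assms sym by auto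
  qed
qed

definition adj :: "nat \<Rightarrow> nat \<Rightarrow> bool" where
  "adj i j \<longleftrightarrow> (j = i+1 \<or> i = j+1 \<or> (even i \<and> (j = i+2 \<or> i = j+2)))"

lemma hpc_iff: "hard_particle_conf r C \<longleftrightarrow> C \<subseteq> {1..2*r+1} \<and> (\<forall>i\<in>C. \<forall>j\<in>C. \<not> adj i j)"
proof -
  have "(\<forall>i\<in>C. \<forall>j\<in>C. {i,j} \<notin> G_edges r) \<longleftrightarrow> (\<forall>i\<in>C. \<forall>j\<in>C. \<not> adj i j)"
    if "C \<subseteq> {1..2*r+1}" using that edge_iff[of _ _ r] unfolding adj_def
    by (smt (verit, best) atLeastAtMost_iff subset_eq)
  then show ?thesis unfolding hard_particle_conf_def by blast
qed

definition Sc :: "nat \<Rightarrow> nat \<Rightarrow> nat set set" where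
  "Sc r m = {C. hard_particle_conf r C \<and> C \<subseteq> {m..}}"

definition Wc :: "nat \<Rightarrow> (nat \<Rightarrow> 'a::comm_ring_1) \<Rightarrow> nat \<Rightarrow> 'a" where
  "Wc r z m = (\<Sum>C\<in>Sc r m. \<Prod>i\<in>C. z i)"

lemma finite_Sc: "finite (Sc r m)"
proof -
  have "Sc r m \<subseteq> Pow {1..2*r+1}" unfolding Sc_def hard_particle_conf_def by auto
  then show ?thesis by (rule finite_subset) auto
qed

lemma Sc_big: assumes "m > 2*r+1" shows "Sc r m = {{}}"
proof -
  have "C = {}" if "C \<in> Sc r m" for C
  proof -
    have "x \<ge> m \<and> x \<le> 2*r+1" if "x \<in> C" for x
      using \<open>C \<in> Sc r m\<close> that unfolding Sc_def hpc_iff by auto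
    then show ?thesis using assms by force
  qed
  moreover have "{} \<in> Sc r m" unfolding Sc_def hpc_iff by auto
  ultimately show ?thesis by blast
qed

lemma Sc_0: "Sc r 0 = Sc r 1"
  unfolding Sc_def hpc_iff by auto

lemma ZG_Wc: "Z_G r z = Wc r z 1"
proof -
  have "{C. hard_particle_conf r C} = Sc r 1" unfolding Sc_def hpc_iff by auto
  then show ?thesis unfolding Z_G_def Wc_def by simp
qed

lemma Sc_split:
  assumes "1 \<le> m" "m \<le> 2*r+1"
  shows "Sc r m = Sc r (m+1) \<union> insert m ` Sc r (m + (if even m then 3 else 2))"
proof
  show "Sc r m \<subseteq> Sc r (m+1) \<union> insert m ` Sc r (m + (if even m then 3 else 2))"
  proof
    fix C assume C: "C \<in> Sc r m"
    show "C \<in> Sc r (m+1) \<union> insert m ` Sc r (m + (if even m then 3 else 2))"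
    proof (cases "m \<in> C")
      case False
      then have "C \<in> Sc r (m+1)" using C unfolding Sc_def
        by (auto simp: Suc_le_eq order.order_iff_strict)
      then show ?thesis by blast
    next
      case True
      have hC: "hard_particle_conf r C" "C \<subseteq> {m..}" using C unfolding Sc_def by auto
      have h1: "hard_particle_conf r (C - {m})" using hC(1) unfolding hpc_iff by auto
      have h2: "x \<ge> m + (if even m then 3 else 2)" if x: "x \<in> C - {m}" for x
      proof -
        have "x \<ge> m" "x \<noteq> m" using x hC(2) by auto
        moreover have "\<not> adj m x" using x True hC(1) unfolding hpc_iff by auto
        ultimately show ?thesis unfolding adj_def by auto
      qed
      have "C - {m} \<in> Sc r (m + (if even m then 3 else 2))"
      proof -
        have "C - {m} \<subseteq> {m + (if even m then 3 else 2)..}" using h2 by blast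
        then show ?thesis using h1 unfolding Sc_def by blast
      qed
      moreover have "C = insert m (C - {m})" using True by auto
      ultimately show ?thesis by blast
    qed
  qed
next
  show "Sc r (m+1) \<union> insert m ` Sc r (m + (if even m then 3 else 2)) \<subseteq> Sc r m"
  proof
    fix C assume "C \<in> Sc r (m+1) \<union> insert m ` Sc r (m + (if even m then 3 else 2))"
    then show "C \<in> Sc r m"
    proof
      assume "C \<in> Sc r (m+1)" then show ?thesis unfolding Sc_def by auto
    next
      assume "C \<in> insert m ` Sc r (m + (if even m then 3 else 2))"
      then obtain C' where C': "C' \<in> Sc r (m + (if even m then 3 else 2))" "C = insert m C'" by blast
      then show ?thesis using assms unfolding Sc_def hpc_iff adj_def
        by (auto split: if_splits)
    qed
  qed
qed

lemma Sc_finite_elem: "C \<in> Sc r m \<Longrightarrow> finite C"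
  unfolding Sc_def hpc_iff by (auto intro: finite_subset)

lemma Sc_ge: "C \<in> Sc r m \<Longrightarrow> x \<in> C \<Longrightarrow> m \<le> x"
  unfolding Sc_def by auto

lemma Wc_big: "m > 2*r+1 \<Longrightarrow> Wc r z m = 1"
  unfolding Wc_def using Sc_big by simp

lemma Wc_0: "Wc r z 0 = Wc r z 1"
  unfolding Wc_def Sc_0 by simp

lemma Wc_rec:
  assumes "\<forall>i>2*r+1. z i = 0" "z 0 = 0"
  shows "Wc r z m = Wc r z (m+1) + z m * Wc r z (m + (if even m then 3 else 2))"
proof (cases "m = 0")
  case True then show ?thesis using assms Wc_0[of r z] by simp
next
  case m0: False
  show ?thesis
  proof (cases "m > 2*r+1")
    case True
    have "Wc r z m = 1" using True by (rule Wc_big)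
    moreover have "Wc r z (m+1) = 1" using True by (intro Wc_big) auto
    moreover have "z m = 0" using True assms by auto
    ultimately show ?thesis by simp
  next
    case False
    define d where "d = (if even m then 3 else 2::nat)"
    have split: "Sc r m = Sc r (m+1) \<union> insert m ` Sc r (m + d)"
      using Sc_split[of m r] m0 False unfolding d_def by auto
    have d2: "d \<ge> 1" unfolding d_def by auto
    have disj: "Sc r (m+1) \<inter> insert m ` Sc r (m + d) = {}"
      using Sc_ge[of _ r "m+1"] by fastforce
    have inj: "inj_on (insert m) (Sc r (m + d))"
    proof (rule inj_onI)
      fix A B assume "A \<in> Sc r (m+d)" "B \<in> Sc r (m+d)" "insert m A = insert m B"
      moreover have "m \<notin> A" "m \<notin> B" using Sc_ge[of _ r "m+d"] d2 calculation(1,2) by fastforce+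
      ultimately show "A = B" by (metis insert_ident)
    qed
    have "Wc r z m = Wc r z (m+1) + (\<Sum>C\<in>insert m ` Sc r (m + d). \<Prod>i\<in>C. z i)"
      unfolding Wc_def split by (rule sum.union_disjoint) (use finite_Sc disj in auto)
    also have "(\<Sum>C\<in>insert m ` Sc r (m + d). \<Prod>i\<in>C. z i) = (\<Sum>C\<in>Sc r (m + d). \<Prod>i\<in>insert m C. z i)"
      using inj by (simp add: sum.reindex)
    also have "\<dots> = (\<Sum>C\<in>Sc r (m + d). z m * (\<Prod>i\<in>C. z i))"
    proof (rule sum.cong)
      fix C assume C: "C \<in> Sc r (m+d)"
      have "m \<notin> C" using Sc_ge[OF C] d2 by fastforce
      then show "(\<Prod>i\<in>insert m C. z i) = z m * (\<Prod>i\<in>C. z i)"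
        using Sc_finite_elem[OF C] by simp
    qed simp
    also have "\<dots> = z m * Wc r z (m+d)" unfolding Wc_def by (simp add: sum_distrib_left)
    finally show ?thesis unfolding d_def .
  qed
qed

lemma Wc_cong:
  assumes "\<And>i. m \<le> i \<Longrightarrow> i \<le> 2*r+1 \<Longrightarrow> z i = z' i"
  shows "Wc r z m = Wc r z' m"
  unfolding Wc_def
proof (rule sum.cong[OF refl], rule prod.cong[OF refl])
  fix C i assume "C \<in> Sc r m" "i \<in> C"
  then have "m \<le> i" "i \<le> 2*r+1" unfolding Sc_def hpc_iff by auto
  then show "z i = z' i" using assms by blast
qed

lemma recO_l:
  fixes W z :: "nat \<Rightarrow> 'a::comm_ring_1"
  assumes "\<And>m. W m = W (m+1) + z m * W (m + (if even m then 3 else 2))"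
  shows "W (2*j+1) = W (2*j+2) + z (2*j+1) * W (2*j+3)"
proof -
  have ne: "even (2*j+1) = False" by simp
  have X: "W (2*j+1) = W (2*j+1+1) + z (2*j+1) * W (2*j+1+2)"
    using assms[of "2*j+1"] by (simp only: ne if_False)
  have eqs: "2*j+1+1 = 2*j+2" "2*j+1+2 = 2*j+3" by simp_all
  show ?thesis using X unfolding eqs .
qed

lemma recE_l:
  fixes W z :: "nat \<Rightarrow> 'a::comm_ring_1"
  assumes "\<And>m. W m = W (m+1) + z m * W (m + (if even m then 3 else 2))"
  shows "W (2*j) = W (2*j+1) + z (2*j) * W (2*j+3)"
proof -
  have ne: "even (2*j) = True" by simp
  show ?thesis using assms[of "2*j"] by (simp only: ne if_True)
qed

lemma core_step:
  fixes W W' z z' :: "nat \<Rightarrow> 'a::comm_ring_1"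
  assumes recW: "\<And>m. W m = W (m+1) + z m * W (m + (if even m then 3 else 2))"
    and recW': "\<And>m. W' m = W' (m+1) + z' m * W' (m + (if even m then 3 else 2))"
    and L1: "z (2*k+2) + z (2*k+1) = z' (2*k+1) + z' (2*k)"
    and L2: "z (2*k+1) * z' (2*k+2) = z (2*k+2) * z' (2*k+3)"
    and IH1: "W (2*k+3) = W' (2*k+2)" and IH2: "W (2*k+5) = W' (2*k+4)"
  shows "W (2*k+1) = W' (2*k)"
proof -
  define A where "A = W' (2*k+4)"
  define B where "B = W' (2*k+5)"
  have eqs: "2*(k+1) = 2*k+2" "2*(k+1)+1 = 2*k+3" "2*(k+1)+3 = 2*k+5" "2*(k+1)+2 = 2*k+4"
    "2*k+2+1 = 2*k+3" "2*k+2+3 = 2*k+5" "2*k+2+2 = 2*k+4" by simp_all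
  have e1: "W (2*k+1) = W (2*k+2) + z (2*k+1) * W (2*k+3)" by (rule recO_l[OF recW])
  have e2: "W (2*k+2) = W (2*k+3) + z (2*k+2) * W (2*k+5)" using recE_l[OF recW, of "k+1"] unfolding eqs .
  have e3: "W' (2*k) = W' (2*k+1) + z' (2*k) * W' (2*k+3)" by (rule recE_l[OF recW'])
  have e4: "W' (2*k+1) = W' (2*k+2) + z' (2*k+1) * W' (2*k+3)" by (rule recO_l[OF recW'])
  have e5: "W' (2*k+2) = W' (2*k+3) + z' (2*k+2) * B" using recE_l[OF recW', of "k+1"] unfolding B_def eqs .
  have e6: "W' (2*k+3) = A + z' (2*k+3) * B" using recO_l[OF recW', of "k+1"] unfolding A_def B_def eqs .
  have "W (2*k+1) = W' (2*k+2) + z (2*k+2) * A + z (2*k+1) * W' (2*k+2)"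
    using e1 e2 IH1 IH2 unfolding A_def by simp
  also have "\<dots> = (A + (z' (2*k+3) + z' (2*k+2)) * B) + z (2*k+2) * A
      + z (2*k+1) * (A + (z' (2*k+3) + z' (2*k+2)) * B)"
    using e5 e6 by (simp add: algebra_simps)
  also have "\<dots> = (A + (z' (2*k+3) + z' (2*k+2)) * B) + (z (2*k+2) + z (2*k+1)) * (A + z' (2*k+3) * B)"
  proof -
    have "z (2*k+1) * (z' (2*k+3) + z' (2*k+2)) = (z (2*k+2) + z (2*k+1)) * z' (2*k+3)"
      using L2 by (simp add: algebra_simps)
    then have "z (2*k+1) * (z' (2*k+3) + z' (2*k+2)) * B = (z (2*k+2) + z (2*k+1)) * z' (2*k+3) * B"
      by simp
    then show ?thesis by (simp add: algebra_simps)
  qed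
  also have "\<dots> = W' (2*k)"
    using e3 e4 e5 e6 L1 by (simp add: algebra_simps)
  finally show ?thesis .
qed

lemma core:
  fixes W W' z z' :: "nat \<Rightarrow> 'a::comm_ring_1"
  assumes recW: "\<And>m. W m = W (m+1) + z m * W (m + (if even m then 3 else 2))"
    and recW': "\<And>m. W' m = W' (m+1) + z' m * W' (m + (if even m then 3 else 2))"
    and bigW: "\<And>m. m > 2*r+1 \<Longrightarrow> W m = 1"
    and bigW': "\<And>m. m > 2*r+1 \<Longrightarrow> W' m = 1"
    and L1: "\<And>k. k \<le> r \<Longrightarrow> z (2*k+2) + z (2*k+1) = z' (2*k+1) + z' (2*k)"
    and L2: "\<And>k. k \<le> r \<Longrightarrow> z (2*k+1) * z' (2*k+2) = z (2*k+2) * z' (2*k+3)"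
  shows "W (2*k+1) = W' (2*k)"
proof (induction "r+2-k" arbitrary: k rule: less_induct)
  case less
  show ?case
  proof (cases "k \<le> r")
    case False
    then show ?thesis using bigW[of "2*k+1"] bigW'[of "2*k"] by simp
  next
    case True
    have IH1: "W (2*(k+1)+1) = W' (2*(k+1))" by (rule less) (use True in simp)
    have IH2: "W (2*(k+2)+1) = W' (2*(k+2))" by (rule less) (use True in simp)
    have eqs: "2*(k+1)+1 = 2*k+3" "2*(k+1) = 2*k+2" "2*(k+2)+1 = 2*k+5" "2*(k+2) = 2*k+4"
      "2*k+2+1 = 2*k+3" "2*k+4+1 = 2*k+5" by simp_all
    show ?thesis
      by (rule core_step[OF recW recW' L1[OF True] L2[OF True]]) (use IH1 IH2 in \<open>unfold eqs\<close>)
  qed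
qed

lemma LA_alg:
  fixes a0 a1 b0 b1 b2 c1 :: "'a::field"
  assumes "a1 \<noteq> 0" "b0 \<noteq> 0" "b1 \<noteq> 0" "c1 * a1 = b1^2 + b2 * b0"
  shows "a0*b2/(a1*b1) + a0*b1/(a1*b0) = a0*c1/(b0*b1)"
proof -
  have "a0*b2/(a1*b1) + a0*b1/(a1*b0) = a0*(b1^2 + b2*b0)/(a1*b0*b1)"
    using assms by (simp add: field_simps power2_eq_square)
  also have "\<dots> = a0*c1/(b0*b1)" using assms(1) unfolding assms(4)[symmetric]
    by (simp add: field_simps)
  finally show ?thesis .
qed

lemma LB_alg:
  fixes a0 bm b0 b1 c0 c1 :: "'a::field"
  assumes "c0 \<noteq> 0" "b0 \<noteq> 0" "b1 \<noteq> 0" "c0 * a0 = b0^2 + b1 * bm"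
  shows "b0*c1/(b1*c0) + bm*c1/(b0*c0) = a0*c1/(b0*b1)"
proof -
  have "b0*c1/(b1*c0) + bm*c1/(b0*c0) = c1*(b0^2 + b1*bm)/(c0*b0*b1)"
    using assms by (simp add: field_simps power2_eq_square)
  also have "\<dots> = a0*c1/(b0*b1)" using assms(1) unfolding assms(4)[symmetric]
    by (simp add: field_simps)
  finally show ?thesis .
qed

lemma L2_alg:
  fixes a0 a1 b0 b1 b2 c1 c2 :: "'a::field"
  assumes "a1 \<noteq> 0" "b0 \<noteq> 0" "b1 \<noteq> 0" "b2 \<noteq> 0" "c1 \<noteq> 0"
  shows "a0*b1/(a1*b0) * (b0*c2/(b1*c1)) = a0*b2/(a1*b1) * (b1*c2/(b2*c1))"
  using assms by (simp add: field_simps)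

definition y_at :: "(nat \<Rightarrow> int \<Rightarrow> ratfun) \<Rightarrow> int \<Rightarrow> nat \<Rightarrow> ratfun" where
  "y_at R n i = (if odd i then
       (let \<alpha> = (i+1) div 2 in R (\<alpha>-1) n * R \<alpha> (n+1) / (R \<alpha> n * R (\<alpha>-1) (n+1)))
     else
       (let \<alpha> = i div 2 in R (\<alpha>-1) n * R (\<alpha>+1) (n+1) / (R \<alpha> n * R \<alpha> (n+1))))"

lemma y_at0: "y_at R 0 i = y_wt R i"
  unfolding y_at_def y_wt_def by simp

lemma y_odd: "y_at R n (2*k+1) = R k n * R (k+1) (n+1) / (R (k+1) n * R k (n+1))"
  unfolding y_at_def by simp

lemma y_even: "y_at R n (2*k+2) = R k n * R (k+2) (n+1) / (R (k+1) n * R (k+1) (n+1))"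
proof -
  have e: "odd (2*k+2) = False" "(2*k+2) div 2 = k+1" "k+1-1 = k" "k+1+1 = k+2" by simp_all
  show ?thesis unfolding y_at_def Let_def by (simp only: e if_False)
qed

definition yv :: "nat \<Rightarrow> (nat \<Rightarrow> int \<Rightarrow> ratfun) \<Rightarrow> int \<Rightarrow> nat \<Rightarrow> ratfun" where
  "yv r R n i = (if 1 \<le> i \<and> i \<le> 2*r+1 then y_at R n i else 0)"

locale QS =
  fixes r :: nat and R :: "nat \<Rightarrow> int \<Rightarrow> ratfun"
  assumes r1: "r \<ge> 1" and Q: "is_Q_system r R"
begin

lemma R0: "R 0 n = 1" and Rr: "R (r+1) n = 1"
  using Q unfolding is_Q_system_def by auto

lemma nz: "\<alpha> \<le> r+1 \<Longrightarrow> R \<alpha> n \<noteq> 0"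
proof -
  assume a: "\<alpha> \<le> r+1"
  consider "\<alpha> = 0" | "\<alpha> = r+1" | "\<alpha> \<in> {1..r}" using a by fastforce
  then show ?thesis using Q R0 Rr unfolding is_Q_system_def by cases auto
qed

lemma Qsh: assumes "1 \<le> \<alpha>" "\<alpha> \<le> r"
  shows "R \<alpha> (n+1+1) * R \<alpha> n = (R \<alpha> (n+1))^2 + R (\<alpha>+1) (n+1) * R (\<alpha>-1) (n+1)"
proof -
  have h: "\<forall>m. R \<alpha> (m+1) * R \<alpha> (m-1) = (R \<alpha> m)^2 + R (\<alpha>+1) m * R (\<alpha>-1) m"
    using Q assms unfolding is_Q_system_def by auto
  have e: "n+1-1 = n" by simp
  show ?thesis using spec[OF h, of "n+1"] unfolding e .
qed

lemma yL1:
  assumes k: "k \<le> r"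
  shows "yv r R n (2*k+2) + yv r R n (2*k+1) = yv r R (n+1) (2*k+1) + yv r R (n+1) (2*k)"
proof -
  define V where "V = R k n * R (k+1) (n+1+1) / (R k (n+1) * R (k+1) (n+1))"
  have lhs: "yv r R n (2*k+2) + yv r R n (2*k+1) = V"
  proof (cases "k < r")
    case True
    have "yv r R n (2*k+2) + yv r R n (2*k+1) = y_at R n (2*k+2) + y_at R n (2*k+1)"
      using True unfolding yv_def by simp
    also have "\<dots> = V" unfolding y_odd y_even V_def
    proof (rule LA_alg)
      show "R (k+1) n \<noteq> 0" "R k (n+1) \<noteq> 0" "R (k+1) (n+1) \<noteq> 0" using True by (auto intro!: nz)
      show "R (k+1) (n+1+1) * R (k+1) n = (R (k+1) (n+1))^2 + R (k+2) (n+1) * R k (n+1)"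
        using Qsh[of "k+1" n] True by (simp add: numeral_eq_Suc)
    qed
    finally show ?thesis .
  next
    case False
    then have kr: "k = r" using k by simp
    have "yv r R n (2*k+2) + yv r R n (2*k+1) = y_at R n (2*k+1)"
      using kr unfolding yv_def by simp
    also have "\<dots> = V" unfolding y_odd V_def using kr Rr[of n] Rr[of "n+1"] Rr[of "n+1+1"] by simp
    finally show ?thesis .
  qed
  have rhs: "yv r R (n+1) (2*k+1) + yv r R (n+1) (2*k) = V"
  proof (cases k)
    case 0
    have "yv r R (n+1) (2*k+1) + yv r R (n+1) (2*k) = y_at R (n+1) (2*0+1)"
      using 0 unfolding yv_def by simp
    also have "\<dots> = V" unfolding y_odd V_def using 0 R0[of "n+1"] R0[of "n+1+1"] R0[of n] by simp
    finally show ?thesis .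
  next
    case (Suc j)
    have "yv r R (n+1) (2*k+1) + yv r R (n+1) (2*k) = y_at R (n+1) (2*k+1) + y_at R (n+1) (2*j+2)"
      using Suc k unfolding yv_def by simp
    also have "\<dots> = V" unfolding y_odd y_even V_def
    proof -
      have e: "j+1 = k" "j+2 = k+1" using Suc by simp_all
      show "R k (n+1) * R (k+1) (n+1+1) / (R (k+1) (n+1) * R k (n+1+1)) +
            R j (n+1) * R (j+2) (n+1+1) / (R (j+1) (n+1) * R (j+1) (n+1+1)) =
            R k n * R (k+1) (n+1+1) / (R k (n+1) * R (k+1) (n+1))"
        unfolding e
      proof (rule LB_alg)
        show "R k (n+1+1) \<noteq> 0" "R k (n+1) \<noteq> 0" "R (k+1) (n+1) \<noteq> 0" using k by (auto intro!: nz)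
        show "R k (n+1+1) * R k n = (R k (n+1))^2 + R (k+1) (n+1) * R j (n+1)"
          using Qsh[of k n] k Suc by simp
      qed
    qed
    finally show ?thesis .
  qed
  show ?thesis using lhs rhs by simp
qed

lemma yL2:
  assumes k: "k \<le> r"
  shows "yv r R n (2*k+1) * yv r R (n+1) (2*k+2) = yv r R n (2*k+2) * yv r R (n+1) (2*k+3)"
proof (cases "k < r")
  case False
  then show ?thesis using k unfolding yv_def by simp
next
  case True
  have e: "2*k+3 = 2*(k+1)+1" "k+1+1 = k+2" by simp_all
  have "yv r R n (2*k+1) * yv r R (n+1) (2*k+2) = y_at R n (2*k+1) * y_at R (n+1) (2*k+2)"
    "yv r R n (2*k+2) * yv r R (n+1) (2*k+3) = y_at R n (2*k+2) * y_at R (n+1) (2*(k+1)+1)"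
    using True unfolding yv_def by (simp_all add: e)
  moreover have "y_at R n (2*k+1) * y_at R (n+1) (2*k+2) = y_at R n (2*k+2) * y_at R (n+1) (2*(k+1)+1)"
    unfolding y_odd y_even e
    by (rule L2_alg) (use True in \<open>auto intro!: nz\<close>)
  ultimately show ?thesis by simp
qed

end


definition zv :: "nat \<Rightarrow> (nat \<Rightarrow> int \<Rightarrow> ratfun) \<Rightarrow> int \<Rightarrow> nat \<Rightarrow> ratfun fps" where
  "zv r R n i = - (fps_const (yv r R n i) * fps_X)"

lemma zv_add: "zv r R n i + zv r R m j = - (fps_const (yv r R n i + yv r R m j) * fps_X)"
  unfolding zv_def fps_const_add[symmetric] distrib_right minus_add_distrib ..

lemma zv_mult: "zv r R n i * zv r R m j = fps_const (yv r R n i * yv r R m j) * (fps_X * fps_X)"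
  unfolding zv_def fps_const_mult[symmetric] minus_mult_minus by (simp only: mult_ac)

context QS
begin

abbreviation Wt where "Wt n m \<equiv> Wc r (zv r R n) m"

lemma zv_out: "i > 2*r+1 \<Longrightarrow> zv r R n i = 0" "zv r R n 0 = 0"
  unfolding zv_def yv_def by auto

lemma Wt_rec: "Wt n m = Wt n (m+1) + zv r R n m * Wt n (m + (if even m then 3 else 2))"
  by (rule Wc_rec) (use zv_out in auto)

lemma Wt_big: "m > 2*r+1 \<Longrightarrow> Wt n m = 1"
  by (rule Wc_big)

lemma Wt_core: "Wt n (2*k+1) = Wt (n+1) (2*k)"
proof (rule core[where r = r])
  show "\<And>m. Wt n m = Wt n (m+1) + zv r R n m * Wt n (m + (if even m then 3 else 2))" by (rule Wt_rec)
  show "\<And>m. Wt (n+1) m = Wt (n+1) (m+1) + zv r R (n+1) m * Wt (n+1) (m + (if even m then 3 else 2))"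
    by (rule Wt_rec)
  show "\<And>m. m > 2*r+1 \<Longrightarrow> Wt n m = 1" by (rule Wt_big)
  show "\<And>m. m > 2*r+1 \<Longrightarrow> Wt (n+1) m = 1" by (rule Wt_big)
  show "\<And>k. k \<le> r \<Longrightarrow> zv r R n (2*k+2) + zv r R n (2*k+1) = zv r R (n+1) (2*k+1) + zv r R (n+1) (2*k)"
    unfolding zv_add using yL1 by simp
  show "\<And>k. k \<le> r \<Longrightarrow> zv r R n (2*k+1) * zv r R (n+1) (2*k+2) = zv r R n (2*k+2) * zv r R (n+1) (2*k+3)"
    unfolding zv_mult using yL2 by simp
qed

lemma conserv: "Wt (n+1) 1 = Wt n 1"
  using Wt_core[of n 0] Wc_0[of r "zv r R (n+1)"] by simp

lemma shiftN: "Wt n 3 = Wt (n+1) 2"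
  using Wt_core[of n 1] by simp

lemma y1: "yv r R n 1 = R 1 (n+1) / R 1 n"
  using y_odd[of R n 0] R0[of n] R0[of "n+1"] unfolding yv_def by simp

lemma keyN: "fps_const (R 1 n) * Wt n 2 =
    fps_const (R 1 n) * Wt n 1 + fps_X * (fps_const (R 1 (n+1)) * Wt (n+1) 2)"
proof -
  have "Wt n 1 = Wt n 2 + zv r R n 1 * Wt n 3"
    using recO_l[where W="Wt n" and z="zv r R n", OF Wt_rec, of 0] by (simp add: numeral_2_eq_2)
  then have "Wt n 2 = Wt n 1 + fps_const (yv r R n 1) * fps_X * Wt (n+1) 2"
    unfolding shiftN zv_def by (simp add: algebra_simps)
  moreover have "R 1 n * yv r R n 1 = R 1 (n+1)"
    unfolding y1 using nz[of 1 n] r1 by simp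
  ultimately show ?thesis
    by (simp add: algebra_simps fps_const_mult[symmetric])
qed

lemma Wt_nth0: "fps_nth (Wt n m) 0 = 1"
proof (induction "2*r+2-m" arbitrary: m rule: less_induct)
  case less
  show ?case
  proof (cases "m > 2*r+1")
    case True then show ?thesis using Wt_big by simp
  next
    case False
    have IH: "fps_nth (Wt n (m+1)) 0 = 1" by (rule less) (use False in simp)
    show ?thesis using Wt_rec[of n m] IH unfolding zv_def by simp
  qed
qed

definition Fs :: "nat \<Rightarrow> ratfun fps" where "Fs m = Abs_fps (\<lambda>j. R 1 (int m + int j))"

lemma Fs_rec: "Fs m = fps_const (R 1 (int m)) + fps_X * Fs (Suc m)"
proof (rule fps_ext)
  fix j show "fps_nth (Fs m) j = fps_nth (fps_const (R 1 (int m)) + fps_X * Fs (Suc m)) j"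
    unfolding Fs_def by (cases j) (simp_all add: algebra_simps)
qed

lemma main_eq: "Fs 0 * Wt 0 1 = fps_const (R 1 0) * Wt 0 2"
proof -
  define D where "D = Wt 0 1"
  have Dc: "Wt (int m) 1 = D" for m
  proof (induction m)
    case 0 show ?case unfolding D_def by simp
  next
    case (Suc m)
    have e: "int (Suc m) = int m + 1" by simp
    show ?case unfolding e conserv using Suc .
  qed
  define \<Delta> where "\<Delta> m = Fs m * D - fps_const (R 1 (int m)) * Wt (int m) 2" for m
  have step: "\<Delta> m = fps_X * \<Delta> (Suc m)" for m
  proof -
    have "\<Delta> m = (fps_const (R 1 (int m)) + fps_X * Fs (Suc m)) * D
       - (fps_const (R 1 (int m)) * D + fps_X * (fps_const (R 1 (int m + 1)) * Wt (int m + 1) 2))"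
      unfolding \<Delta>_def using Fs_rec[of m] keyN[of "int m"] Dc[of m] by simp
    also have "\<dots> = fps_X * \<Delta> (Suc m)" unfolding \<Delta>_def by (simp add: algebra_simps)
    finally show ?thesis .
  qed
  have "\<forall>m. fps_nth (\<Delta> m) j = 0" for j
  proof (induction j)
    case 0 show ?case by (intro allI, subst step) simp
  next
    case (Suc j) then show ?case by (intro allI, subst step) simp
  qed
  then have "\<Delta> 0 = 0" by (intro fps_ext) simp
  then show ?thesis unfolding \<Delta>_def D_def by simp
qed

end

theorem mainTheorem8:
  fixes r :: nat and R :: "nat \<Rightarrow> int \<Rightarrow> ratfun"
  assumes "r \<ge> 1" and "is_Q_system r R"
  shows "Abs_fps (\<lambda>n. R 1 (int n)) =
    fps_const (R 1 0) *
      Z_G r (\<lambda>i. if i = 1 then 0 else - (fps_const (y_wt R i) * fps_X))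
    / Z_G r (\<lambda>i. - (fps_const (y_wt R i) * fps_X))"
proof -
  interpret QS r R using assms by unfold_locales
  define zf where "zf i = - (fps_const (y_wt R i) * fps_X)" for i
  have agree: "zf i = zv r R 0 i" if "1 \<le> i" "i \<le> 2*r+1" for i
    using that unfolding zf_def zv_def yv_def y_at0 by simp
  have den: "Z_G r zf = Wt 0 1"
    unfolding ZG_Wc by (rule Wc_cong) (use agree in auto)
  define zz where "zz i = (if i = 1 then 0 else zv r R 0 i)" for i
  have zzrec: "\<And>m. Wc r zz m = Wc r zz (m+1) + zz m * Wc r zz (m + (if even m then 3 else 2))"
    by (rule Wc_rec) (use zv_out in \<open>auto simp: zz_def\<close>)
  have "Wc r zz 1 = Wc r zz 2 + zz 1 * Wc r zz 3"
    using recO_l[where W="Wc r zz" and z=zz, OF zzrec, of 0] by (simp add: numeral_2_eq_2)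
  then have zz12: "Wc r zz 1 = Wc r zz 2" unfolding zz_def by simp
  have num: "Z_G r (\<lambda>i. if i = 1 then 0 else zf i) = Wt 0 2"
  proof -
    have "Z_G r (\<lambda>i. if i = 1 then 0 else zf i) = Wc r zz 1"
      unfolding ZG_Wc by (rule Wc_cong) (use agree in \<open>auto simp: zz_def\<close>)
    also have "\<dots> = Wc r zz 2" by (rule zz12)
    also have "\<dots> = Wt 0 2" by (rule Wc_cong) (auto simp: zz_def)
    finally show ?thesis .
  qed
  have lhs: "Abs_fps (\<lambda>n. R 1 (int n)) = Fs 0" by (simp add: Fs_def)
  have D0: "Wt 0 1 \<noteq> 0"
  proof
    assume "Wt 0 1 = 0"
    then have "fps_nth (Wt 0 1) 0 = 0" by simp
    then show False using Wt_nth0[of 0 1] by simp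
  qed
  have "Fs 0 = fps_const (R 1 0) * Wt 0 2 / Wt 0 1"
    using main_eq D0 by (metis nonzero_mult_div_cancel_right)
  then show ?thesis unfolding lhs num[unfolded zf_def] den[unfolded zf_def] .
qed

end
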